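(* Let $f\in C^2([1,t_m))$ be the solution of $f''+\frac{4}{3t}f'-\frac{2}{3t^2}f(1+f)-\frac{4(f')^2}{3(1+f)}=0$, $f(1)=\beta>0$, $f'(1)=\beta_0>0$, on its maximal interval of existence $[1,t_m)$, let $0<A<2$ and $g(t)=\exp\big(-A\int_1^t\frac{f(s)(1+f(s))}{s^2f'(s)}ds\big)$. Then $$\lim_{t\to t_m}\frac{1}{g(t)f(t)^{1/2}}=0 .$$
   Context: It is known that $f>0$, $f'>0$ on $[1,t_m)$ and $f(t)\to+\infty$ as $t\to t_m$. *)

theory Defs
  imports "HOL-Analysis.Analysis"
begin

definition approach_left :: "ereal \<Rightarrow> real filter" where
  "approach_left T = (if T = \<infinity> then at_top else at_left (real_of_ereal T))"

end

theory Submission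
  imports Defs begin

lemma decr_I:
  fixes g g' :: "real \<Rightarrow> real" and tm :: ereal
  assumes d: "\<And>x. x \<in> {t. 1 \<le> t \<and> ereal t < tm} \<Longrightarrow> (g has_real_derivative g' x) (at x within {t. 1 \<le> t \<and> ereal t < tm})"
    and n: "\<And>x. x \<in> {t. 1 \<le> t \<and> ereal t < tm} \<Longrightarrow> g' x \<le> 0"
    and a: "1 \<le> a" and b: "ereal b < tm" and ab: "a \<le> b"
  shows "g b \<le> g a"
proof (rule DERIV_nonpos_imp_decreasing_open[OF ab])
  let ?I = "{t. 1 \<le> t \<and> ereal t < tm}"
  have sub: "{a..b} \<subseteq> ?I" using a b ab
    by auto (meson ereal_less_eq(3) le_less_trans)
  show "continuous_on {a..b} g"
  proof (rule continuous_on_subset[OF _ sub])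
    show "continuous_on ?I g"
      using d by (meson DERIV_continuous continuous_on_eq_continuous_within)
  qed
  fix x assume x: "a < x" "x < b"
  have "x \<in> interior ?I"
  proof -
    have "{a<..<b} \<subseteq> ?I" using sub by (meson greaterThanLessThan_subseteq_atLeastAtMost_iff order_refl subset_trans)
    moreover have "x \<in> {a<..<b}" using x by auto
    ultimately show ?thesis by (meson interior_maximal open_greaterThanLessThan subsetD)
  qed
  hence "at x within ?I = at x" by (rule at_within_interior)
  moreover have "x \<in> ?I" using sub x by (meson atLeastAtMost_iff less_le subsetD)
  ultimately show "\<exists>y. DERIV g x :> y \<and> y \<le> 0" using d n by metis
qed

lemma expprod3: "exp (a::real) * exp b / exp c = exp (a + b - c)" by (simp only: exp_diff exp_add)
lemma alg1: "(y::real) * (-1/3 * z) + c * r - d * (q * (-1/3 * r)) = -1/3 * (y * z) + c * r + d/3 * (q * r)"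
  by (simp add: algebra_simps)
lemma frac12: "12 * (y::real) / (9 + z * 9) = 4 * y / (3 + 3 * z)"
proof -
  have "9 + z * 9 = 3 * (3 + 3 * z)" by simp
  hence "12 * y / (9 + z * 9) = (3 * (4 * y)) / (3 * (3 + 3 * z))" by simp
  also have "\<dots> = 4 * y / (3 + 3 * z)" by (rule mult_divide_mult_cancel_left) simp
  finally show ?thesis .
qed
lemma expinv: "1 / (exp (- x) * s) = exp x / (s::real)"
  by (simp add: exp_minus divide_inverse)
lemma expprod1: "exp (x::real) * exp y = exp (x + y)" by (simp add: exp_add)
lemma expprod2: "exp (x::real) / exp y = exp (x - y)" by (simp add: exp_diff)

theorem corollarys:
  fixes f f' f'' :: "real \<Rightarrow> real" and tm :: ereal and \<beta> \<beta>0 A :: real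
  defines "I \<equiv> {t::real. 1 \<le> t \<and> ereal t < tm}"
  assumes tm: "tm > 1"
    and d1: "\<And>t. t \<in> I \<Longrightarrow> (f has_real_derivative f' t) (at t within I)"
    and d2: "\<And>t. t \<in> I \<Longrightarrow> (f' has_real_derivative f'' t) (at t within I)"
    and c2: "continuous_on I f''"
    and ode: "\<And>t. t \<in> I \<Longrightarrow>
       f'' t + 4 / (3 * t) * f' t - 2 / (3 * t\<^sup>2) * f t * (1 + f t)
         - 4 * (f' t)\<^sup>2 / (3 * (1 + f t)) = 0"
    and init: "f 1 = \<beta>" "\<beta> > 0" "f' 1 = \<beta>0" "\<beta>0 > 0"
    and pos: "\<And>t. t \<in> I \<Longrightarrow> f t > 0" "\<And>t. t \<in> I \<Longrightarrow> f' t > 0"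
    and blowup: "filterlim f at_top (approach_left tm)"
    and A: "0 < A" "A < 2"
  shows "((\<lambda>t. 1 / (exp (- A * integral {1..t} (\<lambda>s. f s * (1 + f s) / (s\<^sup>2 * f' s)))
                       * sqrt (f t))) \<longlongrightarrow> 0) (approach_left tm)"
proof -
  have tI: "\<And>t. t \<in> I \<Longrightarrow> 1 \<le> t" "\<And>t. t \<in> I \<Longrightarrow> ereal t < tm" by (auto simp: I_def)
  have pp: "t > 0" "f t > 0" "f' t > 0" "1 + f t > 0" if "t \<in> I" for t
    using tI(1)[OF that] pos(1)[OF that] pos(2)[OF that] by auto
  have I1: "1 \<in> I" using tm by (simp add: I_def one_ereal_def)
  have dec: "g b \<le> g a" if "\<And>x. x \<in> I \<Longrightarrow> (g has_real_derivative g' x) (at x within I)"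
     "\<And>x. x \<in> I \<Longrightarrow> g' x \<le> 0" "a \<in> I" "b \<in> I" "a \<le> b" for g g' a b
    using decr_I[of tm g g' a b] that unfolding I_def by auto
  define L where "L t = 4/3 * ln t + ln (f' t) - 4/3 * ln (1 + f t)" for t
  define L' where "L' t = 2/3 * f t * (1 + f t) / (t\<^sup>2 * f' t)" for t
  have dL: "(L has_real_derivative L' t) (at t within I)" if t: "t \<in> I" for t
  proof -
    have p: "t > 0" "f t > 0" "f' t > 0" using tI(1)[OF t] pos t by auto
    have "(L has_real_derivative (4/3 * (1/t) + f'' t / f' t - 4/3 * (f' t / (1 + f t)))) (at t within I)"
      unfolding L_def using p
      by (auto intro!: derivative_eq_intros d1[OF t] d2[OF t]) (auto simp: divide_simps)
    moreover have "4/3 * (1/t) + f'' t / f' t - 4/3 * (f' t / (1 + f t)) = L' t"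
    proof -
      have e: "f'' t = - 4 / (3 * t) * f' t + 2 / (3 * t\<^sup>2) * f t * (1 + f t)
         + 4 * (f' t)\<^sup>2 / (3 * (1 + f t))" using ode[OF t] by linarith
      have "1 + f t > 0" using p by simp
      then show ?thesis unfolding e L'_def using p
        by (simp add: divide_simps power2_eq_square) (simp add: algebra_simps)
    qed
    ultimately show ?thesis by simp
  qed
  have fmono: "f a \<le> f b" if "a \<in> I" "b \<in> I" "a \<le> b" for a b
  proof -
    have "- f b \<le> - f a"
      by (rule dec[of "\<lambda>t. - f t" "\<lambda>t. - f' t" a b]) (auto intro!: DERIV_minus d1 that simp: less_imp_le pos(2))
    thus ?thesis by simp
  qed
  have fb: "f t \<ge> \<beta>" if "t \<in> I" for t using fmono[OF I1 that tI(1)[OF that]] init by simp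
  have exL: "exp (L t) * L' t = 2/3 * f t * exp (-2/3 * ln t - 1/3 * ln (1 + f t))" if t: "t \<in> I" for t
  proof -
    note p = pp[OF t]
    have "L' t = 2/3 * f t * exp (ln (1 + f t)) / (exp (2 * ln t) * exp (ln (f' t)))"
      using p by (simp add: L'_def exp_double)
    hence "exp (L t) * L' t = 2/3 * f t * (exp (L t) * exp (ln (1 + f t)) / (exp (2 * ln t) * exp (ln (f' t))))"
      by simp
    also have "\<dots> = 2/3 * f t * exp (L t + ln (1 + f t) - 2 * ln t - ln (f' t))"
      by (simp add: exp_add exp_diff)
    also have "L t + ln (1 + f t) - 2 * ln t - ln (f' t) = -2/3 * ln t - 1/3 * ln (1 + f t)"
      unfolding L_def by (simp add: algebra_simps)
    finally show ?thesis .
  qed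
  have tmfin: "tm \<noteq> \<infinity>"
  proof
    assume inf: "tm = \<infinity>"
    define c0 where "c0 = 2/3 * \<beta> / (1 + \<beta>)"
    have c0: "c0 > 0" using init unfolding c0_def by simp
    define D where "D = exp (L 1) - 3 * c0"
    have wlow: "exp (L t) \<ge> D + 3 * c0 * exp (1/3 * ln t)" if t: "t \<in> I" for t
    proof -
      have "- (exp (L t) - 3 * c0 * exp (1/3 * ln t)) \<le> - (exp (L 1) - 3 * c0 * exp (1/3 * ln 1))"
      proof (rule dec[of "\<lambda>t. - (exp (L t) - 3 * c0 * exp (1/3 * ln t))" "\<lambda>t. - (exp (L t) * L' t - 3 * c0 * (exp (1/3 * ln t) * (1/3 * (1/t))))"])
        fix x assume x: "x \<in> I"
        note p = pp[OF x]
        show "((\<lambda>t. - (exp (L t) - 3 * c0 * exp (1/3 * ln t))) has_real_derivative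
          - (exp (L x) * L' x - 3 * c0 * (exp (1/3 * ln x) * (1/3 * (1/x))))) (at x within I)"
          using p by (auto intro!: derivative_eq_intros dL x)
        have e1: "exp (1/3 * ln x) * (1/x) = exp (-2/3 * ln x)"
        proof -
          have "exp (1/3 * ln x) * (1/x) = exp (1/3 * ln x) / exp (ln x)" using p by simp
          also have "\<dots> = exp (1/3 * ln x - ln x)" by (rule exp_diff[symmetric])
          also have "1/3 * ln x - ln x = -2/3 * ln x" by simp
          finally show ?thesis .
        qed
        have e2: "exp (-2/3 * ln x - 1/3 * ln (1 + f x)) = exp (-2/3 * ln x) * exp (- 1/3 * ln (1 + f x))"
          by (simp add: exp_add[symmetric])
        have b0: "ln (1 + f x) \<ge> 0" using p by simp
        have e3: "exp (- 1/3 * ln (1 + f x)) \<ge> exp (- ln (1 + f x))" using b0 by simp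
        have e4: "exp (- ln (1 + f x)) = 1 / (1 + f x)" using p by (simp add: exp_minus inverse_eq_divide)
        have e5: "f x / (1 + f x) \<ge> \<beta> / (1 + \<beta>)" using fb[OF x] p init
          by (simp add: divide_simps algebra_simps)
        have "f x * exp (- 1/3 * ln (1 + f x)) \<ge> \<beta> / (1 + \<beta>)"
        proof -
          have "f x * exp (- 1/3 * ln (1 + f x)) \<ge> f x * exp (- ln (1 + f x))"
            using e3 p by (intro mult_left_mono) auto
          thus ?thesis using e4 e5 by simp
        qed
        hence "2/3 * (\<beta> / (1 + \<beta>)) * exp (-2/3 * ln x) \<le> 2/3 * (f x * exp (- 1/3 * ln (1 + f x))) * exp (-2/3 * ln x)"
          by (intro mult_right_mono mult_left_mono) auto
        hence "2/3 * f x * exp (-2/3 * ln x - 1/3 * ln (1 + f x)) \<ge> c0 * exp (-2/3 * ln x)"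
          unfolding e2 c0_def by (simp add: ac_simps)
        moreover have "3 * c0 * (exp (1/3 * ln x) * (1/3 * (1/x))) = c0 * exp (-2/3 * ln x)"
          by (subst e1[symmetric]) simp
        ultimately show "- (exp (L x) * L' x - 3 * c0 * (exp (1/3 * ln x) * (1/3 * (1/x)))) \<le> 0"
          using exL[OF x] e1 by linarith
      qed (use t I1 tI in auto)
      thus ?thesis unfolding D_def by simp
    qed
    have vup: "exp (-1/3 * ln (1 + f t)) + c0 * ln t - D * exp (-1/3 * ln t) \<le> exp (-1/3 * ln (1 + f 1)) - D"
      if t: "t \<in> I" for t
    proof -
      have "exp (-1/3 * ln (1 + f t)) + c0 * ln t - D * exp (-1/3 * ln t) \<le>
            exp (-1/3 * ln (1 + f 1)) + c0 * ln 1 - D * exp (-1/3 * ln 1)"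
      proof (rule dec[of "\<lambda>t. exp (-1/3 * ln (1 + f t)) + c0 * ln t - D * exp (-1/3 * ln t)"
           "\<lambda>t. exp (-1/3 * ln (1 + f t)) * (-1/3 * (f' t / (1 + f t))) + c0 * (1/t) - D * (exp (-1/3 * ln t) * (-1/3 * (1/t)))"])
        fix x assume x: "x \<in> I"
        note p = pp[OF x]
        show "((\<lambda>t. exp (-1/3 * ln (1 + f t)) + c0 * ln t - D * exp (-1/3 * ln t)) has_real_derivative
          exp (-1/3 * ln (1 + f x)) * (-1/3 * (f' x / (1 + f x))) + c0 * (1/x) - D * (exp (-1/3 * ln x) * (-1/3 * (1/x)))) (at x within I)"
        proof -
          have "9 + f x * 9 \<noteq> 0" "3 + 3 * f x \<noteq> 0" "x \<noteq> 0" using p by auto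
          thus ?thesis using p by (auto intro!: derivative_eq_intros d1 x) (simp add: divide_simps, auto simp: algebra_simps)
        qed
        define E where "E = exp (-4/3 * ln x)"
        have E0: "E > 0" unfolding E_def by simp
        have i1: "exp (-1/3 * ln (1 + f x)) * (f' x / (1 + f x)) = exp (L x) * E"
        proof -
          have "exp (-1/3 * ln (1 + f x)) * (f' x / (1 + f x)) =
                exp (-1/3 * ln (1 + f x)) * exp (ln (f' x)) / exp (ln (1 + f x))" using p by simp
          also have "\<dots> = exp (-1/3 * ln (1 + f x) + ln (f' x) - ln (1 + f x))" by (rule expprod3)
          also have "\<dots> = exp (L x + (-4/3 * ln x))" unfolding L_def by (simp add: algebra_simps)
          finally show ?thesis unfolding E_def by (simp only: exp_add)
        qed
        have i2: "exp (-1/3 * ln x) * (1/x) = E"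
        proof -
          have "exp (-1/3 * ln x) * (1/x) = exp (-1/3 * ln x) / exp (ln x)" using p by simp
          also have "\<dots> = exp (-1/3 * ln x - ln x)" by (rule exp_diff[symmetric])
          finally show ?thesis unfolding E_def by simp
        qed
        have i3: "1/x = exp (1/3 * ln x) * E"
        proof -
          have "exp (1/3 * ln x) * E = exp (1/3 * ln x + -4/3 * ln x)" unfolding E_def by (simp only: exp_add)
          also have "\<dots> = exp (- ln x)" by simp
          finally show ?thesis using p by (simp add: exp_minus inverse_eq_divide)
        qed
        have "exp (L x) * E \<ge> (D + 3 * c0 * exp (1/3 * ln x)) * E" using wlow[OF x] E0 by simp
        have "exp (-1/3 * ln (1 + f x)) * (-1/3 * (f' x / (1 + f x))) + c0 * (1/x) - D * (exp (-1/3 * ln x) * (-1/3 * (1/x)))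
          = -1/3 * (exp (L x) * E) + c0 * (exp (1/3 * ln x) * E) + D/3 * E"
          unfolding alg1 unfolding i1 i2 unfolding i3 by (rule refl)
        also have "\<dots> \<le> 0" using \<open>exp (L x) * E \<ge> _\<close> by (simp only: distrib_right)
        finally show "exp (-1/3 * ln (1 + f x)) * (-1/3 * (f' x / (1 + f x))) + c0 * (1/x) - D * (exp (-1/3 * ln x) * (-1/3 * (1/x))) \<le> 0" .
      qed (use t I1 tI in auto)
      thus ?thesis by simp
    qed
    define v1 where "v1 = exp (-1/3 * ln (1 + f 1))"
    define t0 where "t0 = exp ((v1 + 2 * \<bar>D\<bar> + 1) / c0)"
    have v1: "v1 > 0" unfolding v1_def by simp
    have t0: "t0 \<in> I" unfolding I_def inf t0_def using v1 c0 by simp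
    have lt0: "ln t0 = (v1 + 2 * \<bar>D\<bar> + 1) / c0" unfolding t0_def by simp
    have "exp (-1/3 * ln t0) \<le> 1" using tI(1)[OF t0] by simp
    hence "D * exp (-1/3 * ln t0) \<le> \<bar>D\<bar>"
    proof -
      have "D * exp (-1/3 * ln t0) \<le> \<bar>D\<bar> * exp (-1/3 * ln t0)" by (intro mult_right_mono) auto
      also have "\<dots> \<le> \<bar>D\<bar>" using \<open>exp (-1/3 * ln t0) \<le> 1\<close> by (simp add: mult_left_le)
      finally show ?thesis .
    qed
    moreover have "c0 * ln t0 = v1 + 2 * \<bar>D\<bar> + 1" unfolding lt0 using c0 by simp
    moreover have "exp (-1/3 * ln (1 + f t0)) > 0" by simp
    moreover have "- D \<le> \<bar>D\<bar>" by simp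
    ultimately show False using vup[OF t0] unfolding v1_def by linarith
  qed
  have Qdec: "exp (2 * L t) - 4 * exp (2/3 * ln t + 1/3 * ln (1 + f t)) \<le> exp (2 * L 1) - 4 * exp (2/3 * ln 1 + 1/3 * ln (1 + f 1))"
    if t: "t \<in> I" for t
  proof (rule dec[of "\<lambda>t. exp (2 * L t) - 4 * exp (2/3 * ln t + 1/3 * ln (1 + f t))"
      "\<lambda>x. exp (2 * L x) * (2 * L' x) - 4 * (exp (2/3 * ln x + 1/3 * ln (1 + f x)) * (2/3 * (1/x) + 1/3 * (f' x / (1 + f x))))"])
    fix x assume x: "x \<in> I"
    note p = pp[OF x]
    show "((\<lambda>t. exp (2 * L t) - 4 * exp (2/3 * ln t + 1/3 * ln (1 + f t))) has_real_derivative
      exp (2 * L x) * (2 * L' x) - 4 * (exp (2/3 * ln x + 1/3 * ln (1 + f x)) * (2/3 * (1/x) + 1/3 * (f' x / (1 + f x))))) (at x within I)"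
      using p by (auto intro!: derivative_eq_intros d1 dL x simp: frac12)
    have k1: "exp (2 * L x) * L' x = 2/3 * f x * exp (2/3 * ln x + ln (f' x) - 5/3 * ln (1 + f x))"
    proof -
      have "exp (2 * L x) * L' x = exp (L x) * (exp (L x) * L' x)" by (simp add: exp_double power2_eq_square)
      also have "\<dots> = 2/3 * f x * (exp (L x) * exp (-2/3 * ln x - 1/3 * ln (1 + f x)))" unfolding exL[OF x] by simp
      also have "exp (L x) * exp (-2/3 * ln x - 1/3 * ln (1 + f x)) = exp (L x + (-2/3 * ln x - 1/3 * ln (1 + f x)))"
        by (simp only: exp_add)
      also have "L x + (-2/3 * ln x - 1/3 * ln (1 + f x)) = 2/3 * ln x + ln (f' x) - 5/3 * ln (1 + f x)"
        unfolding L_def by (simp add: algebra_simps)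
      finally show ?thesis .
    qed
    have k2: "exp (2/3 * ln x + 1/3 * ln (1 + f x)) * (f' x / (1 + f x)) = exp (2/3 * ln x + ln (f' x) - 2/3 * ln (1 + f x))"
    proof -
      have "exp (2/3 * ln x + 1/3 * ln (1 + f x)) * (f' x / (1 + f x)) =
            exp (2/3 * ln x + 1/3 * ln (1 + f x)) * exp (ln (f' x)) / exp (ln (1 + f x))" using p by simp
      also have "\<dots> = exp (2/3 * ln x + 1/3 * ln (1 + f x) + ln (f' x) - ln (1 + f x))" by (rule expprod3)
      also have "2/3 * ln x + 1/3 * ln (1 + f x) + ln (f' x) - ln (1 + f x) = 2/3 * ln x + ln (f' x) - 2/3 * ln (1 + f x)"
        by (simp add: algebra_simps)
      finally show ?thesis .
    qed
    have k3: "f x * exp (2/3 * ln x + ln (f' x) - 5/3 * ln (1 + f x)) \<le> exp (2/3 * ln x + ln (f' x) - 2/3 * ln (1 + f x))"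
    proof -
      have "exp (2/3 * ln x + ln (f' x) - 2/3 * ln (1 + f x)) = exp (ln (1 + f x)) * exp (2/3 * ln x + ln (f' x) - 5/3 * ln (1 + f x))"
        by (simp only: exp_add[symmetric]) (simp add: algebra_simps)
      also have "\<dots> = (1 + f x) * exp (2/3 * ln x + ln (f' x) - 5/3 * ln (1 + f x))" using p by simp
      finally show ?thesis by (simp add: mult_right_mono)
    qed
    have k4: "exp (2/3 * ln x + 1/3 * ln (1 + f x)) * (2/3 * (1/x)) \<ge> 0" using p by simp
    have "exp (2 * L x) * (2 * L' x) - 4 * (exp (2/3 * ln x + 1/3 * ln (1 + f x)) * (2/3 * (1/x) + 1/3 * (f' x / (1 + f x))))
      = 4/3 * (f x * exp (2/3 * ln x + ln (f' x) - 5/3 * ln (1 + f x))) - 4 * (exp (2/3 * ln x + 1/3 * ln (1 + f x)) * (2/3 * (1/x)))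
        - 4/3 * exp (2/3 * ln x + ln (f' x) - 2/3 * ln (1 + f x))"
      unfolding k2[symmetric] using k1 by (simp add: algebra_simps)
    also have "\<dots> \<le> 0" using k3 k4 by linarith
    finally show "exp (2 * L x) * (2 * L' x) - 4 * (exp (2/3 * ln x + 1/3 * ln (1 + f x)) * (2/3 * (1/x) + 1/3 * (f' x / (1 + f x)))) \<le> 0" .
  qed (use t I1 tI in auto)
  have integ: "integral {1..t} (\<lambda>s. f s * (1 + f s) / (s\<^sup>2 * f' s)) = 3/2 * (L t - L 1)"
    if t: "t \<in> I" for t
  proof -
    have sub: "{1..t} \<subseteq> I" using t unfolding I_def by auto (meson ereal_less_eq(3) le_less_trans)
    have "((\<lambda>s. f s * (1 + f s) / (s\<^sup>2 * f' s)) has_integral (3/2 * L t - 3/2 * L 1)) {1..t}"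
    proof (rule fundamental_theorem_of_calculus)
      show "1 \<le> t" using tI(1)[OF t] .
      fix x assume x: "x \<in> {1..t}"
      hence xI: "x \<in> I" using sub by auto
      have "((\<lambda>s. 3/2 * L s) has_real_derivative 3/2 * L' x) (at x within I)"
        by (intro DERIV_cmult dL xI)
      moreover have "3/2 * L' x = f x * (1 + f x) / (x\<^sup>2 * f' x)" unfolding L'_def by simp
      ultimately have "((\<lambda>s. 3/2 * L s) has_real_derivative f x * (1 + f x) / (x\<^sup>2 * f' x)) (at x within {1..t})"
        using DERIV_subset sub by metis
      thus "((\<lambda>s. 3/2 * L s) has_vector_derivative f x * (1 + f x) / (x\<^sup>2 * f' x)) (at x within {1..t})"
        by (simp add: has_real_derivative_iff_has_vector_derivative)
    qed
    thus ?thesis by (simp add: integral_unique algebra_simps)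
  qed
  obtain T where tmT: "tm = ereal T" using tmfin tm by (cases tm) auto
  have T1: "T > 1" using tm tmT by (simp add: one_ereal_def)
  have IT: "t \<in> I \<longleftrightarrow> 1 \<le> t \<and> t < T" for t unfolding I_def tmT by simp
  have F: "approach_left tm = at_left T" unfolding approach_left_def tmT by simp
  define Q1 where "Q1 = exp (2 * L 1) - 4 * exp (2/3 * ln 1 + 1/3 * ln (1 + f 1))"
  define K where "K = 4 * exp (2/3 * ln T)"
  define M where "M = \<bar>Q1\<bar> + 2 * K"
  have K0: "K > 0" unfolding K_def by simp
  have M0: "M > 0" unfolding M_def using K0 by simp
  define C where "C = exp (- (3 * A / 2) * L 1) * M powr (3 * A / 4)"
  define G where "G t = 1 / (exp (- A * integral {1..t} (\<lambda>s. f s * (1 + f s) / (s\<^sup>2 * f' s))) * sqrt (f t))" for t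
  have bound: "G t \<le> C * f t powr (A/4 - 1/2)" if t: "t \<in> I" and f1: "f t \<ge> 1" for t
  proof -
    note p = pp[OF t]
    have tT: "t < T" "1 \<le> t" using t IT by auto
    have h0: "exp (2/3 * ln t + 1/3 * ln (1 + f t)) = exp (2/3 * ln t) * exp (1/3 * ln (1 + f t))" by (simp only: exp_add)
    have h1: "exp (2 * L t) \<le> Q1 + 4 * (exp (2/3 * ln t) * exp (1/3 * ln (1 + f t)))"
      using Qdec[OF t] unfolding Q1_def h0 by simp
    have h2: "exp (2/3 * ln t) \<le> exp (2/3 * ln T)" using tT p by simp
    have hX: "exp (1/3 * ln (1 + f t)) = (1 + f t) powr (1/3)" using p by (simp add: powr_def)
    have h3: "exp (2/3 * ln t) * exp (1/3 * ln (1 + f t)) \<le> exp (2/3 * ln T) * exp (1/3 * ln (1 + f t))"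
      using h2 by (intro mult_right_mono) auto
    have h4: "exp (2 * L t) \<le> \<bar>Q1\<bar> + K * (1 + f t) powr (1/3)"
      using h1 h3 unfolding K_def hX by linarith
    have h5: "(1 + f t) powr (1/3) \<le> (2 * f t) powr (1/3)" using p f1 by (intro powr_mono2) auto
    have h6: "(2 * f t) powr (1/3) = 2 powr (1/3) * f t powr (1/3)" by (simp add: powr_mult)
    have h7: "2 powr (1/3) \<le> (2::real)" using powr_mono[of "1/3" 1 "2::real"] by simp
    have f13: "f t powr (1/3) \<ge> 1" using f1 by (simp add: ge_one_powr_ge_zero)
    have *: "2 powr (1/3) * f t powr (1/3) \<le> 2 * f t powr (1/3)"
      using h7 f13 by (intro mult_right_mono) auto
    have "\<bar>Q1\<bar> + K * (1 + f t) powr (1/3) \<le> \<bar>Q1\<bar> * f t powr (1/3) + K * (2 * f t powr (1/3))"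
    proof -
      have "\<bar>Q1\<bar> \<le> \<bar>Q1\<bar> * f t powr (1/3)" using f13 by (simp add: mult_le_cancel_left1)
      moreover have "K * (1 + f t) powr (1/3) \<le> K * (2 * f t powr (1/3))"
        using K0 h5 h6 * by simp
      ultimately show ?thesis by linarith
    qed
    also have "\<dots> = M * f t powr (1/3)" unfolding M_def by (simp add: algebra_simps)
    finally have e2L: "exp (2 * L t) \<le> M * f t powr (1/3)" using h4 by linarith
    have "exp (2 * L t) powr (3*A/4) \<le> (M * f t powr (1/3)) powr (3*A/4)"
      using e2L A by (intro powr_mono2) auto
    also have "\<dots> = M powr (3*A/4) * f t powr (A/4)" using M0 p by (simp add: powr_mult powr_powr)
    finally have e3: "exp (2 * L t) powr (3*A/4) \<le> M powr (3*A/4) * f t powr (A/4)" .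
    have "G t = exp (A * (3/2 * (L t - L 1))) / sqrt (f t)"
      unfolding G_def integ[OF t] using expinv[of "A * (3/2 * (L t - L 1))" "sqrt (f t)"] by simp
    also have "exp (A * (3/2 * (L t - L 1))) = exp (- (3 * A / 2) * L 1) * exp (2 * L t) powr (3*A/4)"
    proof -
      have "A * (3/2 * (L t - L 1)) = - (3 * A / 2) * L 1 + 3*A/4 * (2 * L t)" by (simp add: field_simps)
      hence "exp (A * (3/2 * (L t - L 1))) = exp (- (3 * A / 2) * L 1) * exp (3*A/4 * (2 * L t))"
        by (simp only: exp_add)
      moreover have "exp (2 * L t) powr (3*A/4) = exp (3*A/4 * (2 * L t))" by (simp add: powr_def)
      ultimately show ?thesis by simp
    qed
    also have "sqrt (f t) = f t powr (1/2)" using p by (simp add: powr_half_sqrt)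
    also have "exp (- (3 * A / 2) * L 1) * exp (2 * L t) powr (3*A/4) / f t powr (1/2)
       \<le> exp (- (3 * A / 2) * L 1) * (M powr (3*A/4) * f t powr (A/4)) / f t powr (1/2)"
      using e3 p by (intro divide_right_mono mult_left_mono) auto
    also have "\<dots> = C * (f t powr (A/4) / f t powr (1/2))" unfolding C_def by simp
    also have "f t powr (A/4) / f t powr (1/2) = f t powr (A/4 - 1/2)" by (simp add: powr_diff)
    finally show ?thesis .
  qed
  have ev1: "eventually (\<lambda>t. t \<in> I) (at_left T)"
    using eventually_at_left_real[OF T1] by eventually_elim (auto simp: IT)
  have ev2: "eventually (\<lambda>t. f t \<ge> 1) (at_left T)"
    using blowup unfolding F filterlim_at_top by auto
  have lim: "((\<lambda>t. C * f t powr (A/4 - 1/2)) \<longlongrightarrow> 0) (at_left T)"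
    using blowup unfolding F by (intro tendsto_mult_right_zero tendsto_neg_powr) (use A in auto)
  have "(G \<longlongrightarrow> 0) (at_left T)"
  proof (rule tendsto_sandwich[OF _ _ tendsto_const lim])
    show "eventually (\<lambda>t. 0 \<le> G t) (at_left T)" using ev1
    proof eventually_elim
      case (elim t)
      thus ?case using pp(2)[OF elim] unfolding G_def by simp
    qed
    show "eventually (\<lambda>t. G t \<le> C * f t powr (A/4 - 1/2)) (at_left T)"
      using ev1 ev2 by eventually_elim (rule bound)
  qed
  thus ?thesis unfolding F G_def .
qed

end
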